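(* Let $\epsilon>0$, $R>0$, $\lambda\in C([0,R])$, and let $\mathcal T'=\{(\alpha,\beta):0\le\beta\le\alpha\le 2R,\ \beta\le 2R-\alpha\}$. Define $\bar\lambda=\max_{\rho\in[0,R]}\frac{|\lambda(\rho)|}{4\epsilon}$, $$G_0(\alpha,\beta)=-\int_{\beta/2}^{\alpha/2}\frac{\lambda(\rho)}{2\epsilon}\,d\rho,$$ and for $k\ge1$ $$G_k(\alpha,\beta)=\int_\beta^\alpha\!\!\int_0^\beta\frac{\lambda\left(\frac{\eta-\sigma}{2}\right)}{4\epsilon}G_{k-1}(\eta,\sigma)\,d\sigma\,d\eta+\int_\beta^\alpha\!\!\int_0^\beta\frac{\eta\sigma}{(\eta^2-\sigma^2)^2}G_{k-1}(\eta,\sigma)\,d\sigma\,d\eta.$$ Then $|G_0|\le F_{00}$ on $\mathcal T'$, and for every $n\ge1$ the integrals defining $G_n$ converge absolutely on $\mathcal T'$ and $$|G_n(\alpha,\beta)|\le F_{n0}(\alpha,\beta)+\sum_{i=0}^{n-1}\sum_{j=1}^{n-i}\frac{C_{(n-i)j}}{4^{\,n-i}}F_{ij}(\alpha,\beta)\qquad\text{for all }(\alpha,\beta)\in\mathcal T'.$$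
   Context: For integers $n,k\ge0$ and $0\le\beta<\alpha$, $F_{nk}(\alpha,\beta)=\frac{\bar\lambda^{n+1}\alpha^n\beta^n}{n!(n+1)!}(\alpha-\beta)\frac{\log^k\left(\frac{\alpha+\beta}{\alpha-\beta}\right)}{k!}$, extended continuously by $0$ on the diagonal $\alpha=\beta$. The numbers $C_{ij}$ (Catalan's triangle) are defined by: $C_{11}=1$; $C_{i0}=0$; $C_{ij}=0$ if $j>i$; and $C_{ij}=C_{(i-1)(j-1)}+C_{i(j+1)}$ for all other index pairs ($i\ge2$, $1\le j\le i$). *)

theory Defs
  imports "HOL-Analysis.Analysis"
begin

definition Fnk :: "real \<Rightarrow> nat \<Rightarrow> nat \<Rightarrow> real \<Rightarrow> real \<Rightarrow> real" where
  "Fnk lbar n k \<alpha> \<beta> =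
     (if \<alpha> = \<beta> then 0
      else lbar ^ (n + 1) * \<alpha> ^ n * \<beta> ^ n / (fact n * fact (n + 1)) * (\<alpha> - \<beta>)
           * (ln ((\<alpha> + \<beta>) / (\<alpha> - \<beta>))) ^ k / fact k)"

function Cat :: "nat \<Rightarrow> nat \<Rightarrow> nat" where
  "Cat i j = (if j = 0 then 0 else if j > i then 0 else if i = 1 \<and> j = 1 then 1
              else Cat (i - 1) (j - 1) + Cat i (j + 1))"
  by pat_completeness auto
termination
  by (relation "measures [fst, \<lambda>(i, j). Suc i - j]") auto

definition Tprime :: "real \<Rightarrow> (real \<times> real) set" where
  "Tprime R = {(\<alpha>, \<beta>). 0 \<le> \<beta> \<and> \<beta> \<le> \<alpha> \<and> \<alpha> \<le> 2 * R \<and> \<beta> \<le> 2 * R - \<alpha>}"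

definition ker1 :: "real \<Rightarrow> (real \<Rightarrow> real) \<Rightarrow> real \<Rightarrow> real \<Rightarrow> real" where
  "ker1 \<epsilon> lam \<eta> \<sigma> = lam ((\<eta> - \<sigma>) / 2) / (4 * \<epsilon>)"

definition ker2 :: "real \<Rightarrow> real \<Rightarrow> real" where
  "ker2 \<eta> \<sigma> = \<eta> * \<sigma> / (\<eta>\<^sup>2 - \<sigma>\<^sup>2)\<^sup>2"

fun G :: "real \<Rightarrow> (real \<Rightarrow> real) \<Rightarrow> nat \<Rightarrow> real \<Rightarrow> real \<Rightarrow> real" where
  "G \<epsilon> lam 0 \<alpha> \<beta> = - (LBINT \<rho>=\<beta>/2..\<alpha>/2. lam \<rho> / (2 * \<epsilon>))"
| "G \<epsilon> lam (Suc k) \<alpha> \<beta> =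
     (LBINT \<eta>=\<beta>..\<alpha>. (LBINT \<sigma>=0..\<beta>. ker1 \<epsilon> lam \<eta> \<sigma> * G \<epsilon> lam k \<eta> \<sigma>))
   + (LBINT \<eta>=\<beta>..\<alpha>. (LBINT \<sigma>=0..\<beta>. ker2 \<eta> \<sigma> * G \<epsilon> lam k \<eta> \<sigma>))"

end

theory Submission
  imports Defs "HOL-Real_Asymp.Real_Asymp"
begin


declare Cat.simps[simp del]

definition Lf :: "real \<Rightarrow> real \<Rightarrow> real" where "Lf x y = ln ((x+y)/(x-y))"
definition cc :: "real \<Rightarrow> nat \<Rightarrow> real" where "cc l i = l^(i+1)/(fact i * fact (i+1))"
definition hh :: "nat \<Rightarrow> real \<Rightarrow> real \<Rightarrow> real" where "hh i x y = x^i*y^i*(x-y)"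
definition hx :: "nat \<Rightarrow> real \<Rightarrow> real \<Rightarrow> real" where "hx i x y = real i * x^(i-1)*y^i*(x-y) + x^i*y^i"
definition hy :: "nat \<Rightarrow> real \<Rightarrow> real \<Rightarrow> real" where "hy i x y = real i * x^i*y^(i-1)*(x-y) - x^i*y^i"
definition hxy :: "nat \<Rightarrow> real \<Rightarrow> real \<Rightarrow> real" where "hxy i x y = real i*(real i+1)*x^(i-1)*y^(i-1)*(x-y)"
definition lm :: "nat \<Rightarrow> real \<Rightarrow> real" where "lm j t = t^j/fact j"
definition dl :: "nat \<Rightarrow> real \<Rightarrow> real" where "dl j t = (if j=0 then 0 else lm (j-1) t)"
definition dl2 :: "nat \<Rightarrow> real \<Rightarrow> real" where "dl2 j t = (if j<2 then 0 else lm (j-2) t)"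
definition Lx :: "real \<Rightarrow> real \<Rightarrow> real" where "Lx x y = -2*y/(x^2-y^2)"
definition Ly :: "real \<Rightarrow> real \<Rightarrow> real" where "Ly x y = 2*x/(x^2-y^2)"
definition Lxy :: "real \<Rightarrow> real \<Rightarrow> real" where "Lxy x y = -2*(x^2+y^2)/(x^2-y^2)^2"

lemma Dpos: "\<bar>y\<bar> < x \<Longrightarrow> x^2 - y^2 > (0::real)"
proof -
  assume a: "\<bar>y\<bar> < x"
  then have "x - y > 0" "x + y > 0" by (auto simp: abs_less_iff)
  then have "(x-y)*(x+y) > 0" by simp
  then show ?thesis by (simp add: power2_eq_square algebra_simps)
qed

lemma D1: "DERIV (\<lambda>x. hh i x y) x :> hx i x y"
  unfolding hh_def hx_def
  by (auto intro!: derivative_eq_intros simp: algebra_simps)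

lemma D2: "DERIV (\<lambda>y. hx i x y) y :> hxy i x y"
proof (cases i)
  case 0 then show ?thesis unfolding hx_def hxy_def by (auto intro!: derivative_eq_intros)
next
  case (Suc k)
  show ?thesis unfolding hx_def hxy_def Suc
    by (rule derivative_eq_intros refl)+ (simp add: algebra_simps)
qed

lemma D3: "DERIV (\<lambda>y. hh i x y) y :> hy i x y"
  unfolding hh_def hy_def
  by (auto intro!: derivative_eq_intros simp: algebra_simps)

lemma D4: "\<bar>y\<bar> < x \<Longrightarrow> DERIV (\<lambda>x. Lf x y) x :> Lx x y"
  unfolding Lf_def Lx_def
  apply (rule derivative_eq_intros refl | simp)+
  apply (simp add: field_simps power2_eq_square)
  done

lemma D5: "\<bar>y\<bar> < x \<Longrightarrow> DERIV (\<lambda>y. Lf x y) y :> Ly x y"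
  unfolding Lf_def Ly_def
  apply (rule derivative_eq_intros refl | simp)+
  apply (simp add: field_simps power2_eq_square)
  done

lemma D6: "\<bar>y\<bar> < x \<Longrightarrow> DERIV (\<lambda>y. Lx x y) y :> Lxy x y"
proof -
  assume a: "\<bar>y\<bar> < x"
  have D: "x^2 - y^2 \<noteq> 0" using a Dpos by force
  have "DERIV (\<lambda>y. Lx x y) y :> ((-2)*(x^2-y^2) - (-2*y)*(-(2*y)))/(x^2-y^2)^2"
    unfolding Lx_def using D by (intro derivative_eq_intros refl) (auto simp: power2_eq_square)
  moreover have "((-2)*(x^2-y^2) - (-2*y)*(-(2*y)))/(x^2-y^2)^2 = Lxy x y"
    unfolding Lxy_def by (simp add: algebra_simps power2_eq_square)
  ultimately show ?thesis by simp
qed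

lemma D7: "DERIV (lm j) t :> dl j t"
proof (cases j)
  case 0 then show ?thesis unfolding lm_def dl_def by (auto intro!: derivative_eq_intros)
next
  case (Suc k)
  have "DERIV (\<lambda>t. t^j / fact j) t :> real j * t^(j-1) / fact j"
    by (auto intro!: derivative_eq_intros)
  moreover have "real j * t^(j-1) / fact j = t^k/fact k" using Suc
  proof -
    have "fact j = real j * fact k" using Suc by (simp add: fact_Suc)
    moreover have "fact k > (0::real)" by simp
    moreover have "real j \<noteq> 0" using Suc by simp
    ultimately show ?thesis using Suc by (metis diff_Suc_1 mult_divide_mult_cancel_left)
  qed
  ultimately show ?thesis unfolding lm_def dl_def using Suc by simp
qed

lemma D8: "DERIV (dl j) t :> dl2 j t"
proof (cases j)
  case 0 then show ?thesis unfolding dl2_def dl_def by (auto intro!: derivative_eq_intros)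
next
  case (Suc k)
  have "dl j = lm k" using Suc unfolding dl_def by auto
  moreover have "dl2 j t = dl k t" using Suc unfolding dl_def dl2_def by auto
  ultimately show ?thesis using D7 by simp
qed

lemma Dne: "\<bar>y\<bar> < x \<Longrightarrow> x^2 - y^2 \<noteq> (0::real)"
  using Dpos by force

lemma I0: "2*x*hx i x y - 2*y*hy i x y = 2*x^i*y^i*(x+y)"
proof (cases i)
  case 0 then show ?thesis by (simp add: hx_def hy_def algebra_simps)
next
  case (Suc k) then show ?thesis by (simp add: hx_def hy_def algebra_simps)
qed

lemma I1: assumes "\<bar>y\<bar> < x"
  shows "hx i x y * Ly x y + hy i x y * Lx x y + hh i x y * Lxy x y = 4 * ker2 x y * hh i x y"
proof -
  define d where "d = x^2-y^2"
  have dn: "d \<noteq> 0" using Dne[OF assms] d_def by simp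
  have "hx i x y * Ly x y + hy i x y * Lx x y + hh i x y * Lxy x y
     = (d * (2*x*hx i x y - 2*y*hy i x y) - 2*(x^2+y^2)*hh i x y)/d^2"
    unfolding Lx_def Ly_def Lxy_def d_def[symmetric] using dn
    by (simp add: field_simps power2_eq_square)
  also have "\<dots> = (d * (2*x^i*y^i*(x+y)) - 2*(x^2+y^2)*(x^i*y^i*(x-y)))/d^2"
    by (simp add: I0 hh_def)
  also have "\<dots> = 4*(x*y/d^2) * (x^i*y^i*(x-y))"
    unfolding d_def using dn by (simp add: field_simps power2_eq_square)
  finally show ?thesis unfolding ker2_def hh_def d_def .
qed

lemma I2: assumes "\<bar>y\<bar> < x"
  shows "hh i x y * Ly x y * Lx x y = - 4 * ker2 x y * hh i x y"
  unfolding hh_def Lx_def Ly_def ker2_def using Dne[OF assms]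
  by (simp add: field_simps power2_eq_square)

lemma cc_Suc: "cc l (Suc k) = l * cc l k / (real (k+1) * real (k+2))"
proof -
  have a: "fact (Suc k) = real (k+1) * fact k" by (simp add: fact_Suc)
  have b: "fact (Suc k + 1) = real (k+2) * fact (Suc k)" by (simp add: fact_Suc)
  have "cc l (Suc k) = l^(k+2)/(fact (Suc k) * fact (Suc k+1))" by (simp add: cc_def)
  also have "\<dots> = l * l^(k+1) / ((real (k+1) * fact k) * (real (k+2) * fact (Suc k)))"
    by (simp only: a[symmetric] b) simp
  also have "\<dots> = l * cc l k / (real (k+1) * real (k+2))"
    by (simp add: cc_def field_simps)
  finally show ?thesis .
qed

lemma I3: "cc l i * hxy i x y = (if i = 0 then 0 else l * (cc l (i-1) * hh (i-1) x y))"
proof (cases i)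
  case 0 then show ?thesis by (simp add: hxy_def)
next
  case (Suc k)
  define P where "P = real (k+1) * real (k+2)"
  have Pn: "P \<noteq> 0" unfolding P_def by simp
  have "hxy i x y = P * hh k x y" unfolding hxy_def hh_def Suc P_def by simp
  moreover have "cc l i = l * cc l k / P" using cc_Suc[of l k] Suc P_def by simp
  ultimately show ?thesis using Suc Pn by simp
qed

definition ff :: "real \<Rightarrow> nat \<Rightarrow> nat \<Rightarrow> real \<Rightarrow> real \<Rightarrow> real" where
  "ff l i j x y = cc l i * hh i x y * lm j (Lf x y)"
definition fx :: "real \<Rightarrow> nat \<Rightarrow> nat \<Rightarrow> real \<Rightarrow> real \<Rightarrow> real" where
  "fx l i j x y = cc l i * (hx i x y * lm j (Lf x y) + hh i x y * (dl j (Lf x y) * Lx x y))"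
definition fxy :: "real \<Rightarrow> nat \<Rightarrow> nat \<Rightarrow> real \<Rightarrow> real \<Rightarrow> real" where
  "fxy l i j x y = (if i = 0 then 0 else l * ff l (i-1) j x y)
     + 4 * ker2 x y * ((if j = 0 then 0 else ff l i (j-1) x y) - (if j < 2 then 0 else ff l i (j-2) x y))"

lemma DFx: assumes "\<bar>y\<bar> < x" shows "DERIV (\<lambda>x. ff l i j x y) x :> fx l i j x y"
proof -
  have a: "DERIV (\<lambda>x. hh i x y) x :> hx i x y" by (rule D1)
  have b: "DERIV (\<lambda>x. lm j (Lf x y)) x :> dl j (Lf x y) * Lx x y"
    by (rule DERIV_chain2[OF D7 D4[OF assms]])
  have "DERIV (\<lambda>x. cc l i * (hh i x y * lm j (Lf x y))) x :> cc l i * (hx i x y * lm j (Lf x y) + hh i x y * (dl j (Lf x y) * Lx x y))"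
    using DERIV_cmult[OF DERIV_mult[OF a b], of "cc l i"] by (rule DERIV_cong) (simp add: algebra_simps)
  then show ?thesis unfolding ff_def fx_def by (simp add: mult.assoc)
qed

lemma DFxy: assumes "\<bar>y\<bar> < x" shows "DERIV (\<lambda>y. fx l i j x y) y :> fxy l i j x y"
proof -
  have a: "DERIV (\<lambda>y. hx i x y) y :> hxy i x y" by (rule D2)
  have b: "DERIV (\<lambda>y. lm j (Lf x y)) y :> dl j (Lf x y) * Ly x y"
    by (rule DERIV_chain2[OF D7 D5[OF assms]])
  have c: "DERIV (\<lambda>y. hh i x y) y :> hy i x y" by (rule D3)
  have d: "DERIV (\<lambda>y. dl j (Lf x y)) y :> dl2 j (Lf x y) * Ly x y"
    by (rule DERIV_chain2[OF D8 D5[OF assms]])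
  have e: "DERIV (\<lambda>y. Lx x y) y :> Lxy x y" by (rule D6[OF assms])
  have "DERIV (\<lambda>y. fx l i j x y) y :> cc l i * ((hxy i x y * lm j (Lf x y) + hx i x y * (dl j (Lf x y) * Ly x y))
        + (hy i x y * (dl j (Lf x y) * Lx x y) + hh i x y * (dl2 j (Lf x y) * Ly x y * Lx x y + dl j (Lf x y) * Lxy x y)))"
    unfolding fx_def
    using DERIV_cmult[OF DERIV_add[OF DERIV_mult[OF a b] DERIV_mult[OF c DERIV_mult[OF d e]]], of "cc l i"]
    by (rule DERIV_cong) (simp add: algebra_simps)
  moreover have "cc l i * ((hxy i x y * lm j (Lf x y) + hx i x y * (dl j (Lf x y) * Ly x y))
        + (hy i x y * (dl j (Lf x y) * Lx x y) + hh i x y * (dl2 j (Lf x y) * Ly x y * Lx x y + dl j (Lf x y) * Lxy x y)))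
     = cc l i * hxy i x y * lm j (Lf x y)
       + cc l i * dl j (Lf x y) * (hx i x y * Ly x y + hy i x y * Lx x y + hh i x y * Lxy x y)
       + cc l i * dl2 j (Lf x y) * (hh i x y * Ly x y * Lx x y)"
    by (simp add: algebra_simps)
  moreover have "\<dots> = fxy l i j x y"
    unfolding I1[OF assms] I2[OF assms] I3 fxy_def ff_def dl_def dl2_def
    by (auto simp: algebra_simps)
  ultimately show ?thesis by simp
qed

lemma Fnk_ff: "Fnk l i j x y = ff l i j x y"
  unfolding Fnk_def ff_def cc_def hh_def lm_def Lf_def by (simp add: field_simps)

lemma Cat_gt: "j > m \<Longrightarrow> Cat m j = 0"
  by (subst Cat.simps) simp

lemma Cat_0: "Cat m 0 = 0"
  by (subst Cat.simps) simp

lemma Cat_rec: "1 \<le> j \<Longrightarrow> j \<le> m \<Longrightarrow> \<not> (m = 1 \<and> j = 1) \<Longrightarrow> Cat m j = Cat (m-1) (j-1) + Cat m (j+1)"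
  by (subst Cat.simps) simp

definition ac :: "nat \<Rightarrow> nat \<Rightarrow> real" where
  "ac m j = (if m = 0 then (if j = 0 then 1 else 0) else real (Cat m j) / 4^m)"

lemma ac_gt: "j > m \<Longrightarrow> ac m j = 0"
  unfolding ac_def by (auto simp: Cat_gt)

lemma ac_nonneg: "ac m j \<ge> 0"
  unfolding ac_def by auto

lemma ac_rec: assumes "m \<ge> 1" shows "ac m (j+1) - ac m (j+2) = ac (m-1) j / 4"
proof (cases "m = 1 \<and> j = 0")
  case True
  have "Cat 1 1 = 1" by (subst Cat.simps) simp
  then show ?thesis using True by (simp add: ac_def Cat_gt)
next
  case False
  show ?thesis
  proof (cases "j + 1 \<le> m")
    case True
    have c: "Cat m (j+1) = Cat (m-1) j + Cat m (j+2)"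
      using Cat_rec[of "j+1" m] True False assms by auto
    have m2: "m - 1 \<noteq> 0" using False True assms by auto
    have "(4::real)^m = 4 * 4^(m-1)" using assms by (metis One_nat_def Suc_pred' less_eq_Suc_le power_Suc)
    then show ?thesis using assms m2 c by (simp add: ac_def field_simps)
  next
    case f2: False
    then show ?thesis using assms by (auto simp: ac_def Cat_gt)
  qed
qed

definition Bs :: "real \<Rightarrow> nat \<Rightarrow> real \<Rightarrow> real \<Rightarrow> real" where
  "Bs l n x y = (\<Sum>i\<le>n. \<Sum>j\<le>n. ac (n-i) j * ff l i j x y)"
definition Wx :: "real \<Rightarrow> nat \<Rightarrow> real \<Rightarrow> real \<Rightarrow> real" where
  "Wx l n x y = (\<Sum>i\<le>n. \<Sum>j\<le>n. ac (n-i) j * fx l i j x y)"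
definition Wxy :: "real \<Rightarrow> nat \<Rightarrow> real \<Rightarrow> real \<Rightarrow> real" where
  "Wxy l n x y = (\<Sum>i\<le>n. \<Sum>j\<le>n. ac (n-i) j * fxy l i j x y)"

lemma shiftP: "(\<Sum>j\<le>Suc N. c j * (if j=0 then 0 else g (j-1))) = (\<Sum>j\<le>N. c (Suc j) * (g j::real))"
  by (subst sum.atMost_Suc_shift) simp

lemma shiftQ: assumes "c (Suc (Suc N)) = 0"
  shows "(\<Sum>j\<le>Suc N. c j * (if j<2 then 0 else g (j-2))) = (\<Sum>j\<le>N. c (Suc (Suc j)) * (g j::real))"
proof -
  have "(\<Sum>j\<le>Suc N. c j * (if j<2 then 0 else g (j-2))) = (\<Sum>j\<le>N. c (Suc j) * (if j=0 then 0 else g (j-1)))"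
    by (subst sum.atMost_Suc_shift) (auto simp: numeral_2_eq_2 intro!: sum.cong)
  also have "\<dots> = (\<Sum>j\<le>N. c (Suc (Suc j)) * g j)"
  proof (cases N)
    case 0
    have z: "c (Suc (Suc 0)) = 0" using assms 0 by simp
    show ?thesis unfolding 0 using z by simp
  next
    case (Suc N')
    have "(\<Sum>j\<le>N. c (Suc j) * (if j=0 then 0 else g (j-1))) = (\<Sum>j\<le>N'. c (Suc (Suc j)) * g j)"
      unfolding Suc by (rule shiftP)
    also have "\<dots> = (\<Sum>j\<le>N. c (Suc (Suc j)) * g j)"
    proof -
      have z: "c (Suc (Suc (Suc N'))) = 0" using assms Suc by simp
      have "(\<Sum>j\<le>N. c (Suc (Suc j)) * g j) = (\<Sum>j\<le>N'. c (Suc (Suc j)) * g j) + c (Suc (Suc (Suc N'))) * g (Suc N')"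
        unfolding Suc by (rule sum.atMost_Suc)
      then show ?thesis using z by simp
    qed
    finally show ?thesis .
  qed
  finally show ?thesis .
qed



lemma Wxy_eq: "Wxy l (Suc n) x y = (l + ker2 x y) * Bs l n x y"
proof -
  define A where "A i j = (if i = 0 then 0 else l * ff l (i-1) j x y)" for i j
  define P where "P i j = (if j = 0 then 0 else ff l i (j-1) x y)" for i j
  define Q where "Q i j = (if j < 2 then 0 else ff l i (j-2) x y)" for i j
  have fe: "fxy l i j x y = A i j + 4 * ker2 x y * (P i j - Q i j)" for i j
    unfolding fxy_def A_def P_def Q_def by simp
  have sA: "(\<Sum>i\<le>Suc n. \<Sum>j\<le>Suc n. ac (Suc n - i) j * A i j) = l * Bs l n x y"
  proof -
    have "(\<Sum>i\<le>Suc n. \<Sum>j\<le>Suc n. ac (Suc n - i) j * A i j) = (\<Sum>i\<le>n. \<Sum>j\<le>Suc n. ac (n - i) j * (l * ff l i j x y))"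
    proof -
      define G where "G i = (\<Sum>j\<le>Suc n. ac (Suc n - i) j * A i j)" for i
      have "(\<Sum>i\<le>Suc n. G i) = G 0 + (\<Sum>i\<le>n. G (Suc i))" by (rule sum.atMost_Suc_shift)
      moreover have "G 0 = 0" unfolding G_def A_def by simp
      moreover have "G (Suc i) = (\<Sum>j\<le>Suc n. ac (n - i) j * (l * ff l i j x y))" for i
        unfolding G_def A_def by simp
      ultimately show ?thesis unfolding G_def by simp
    qed
    also have "\<dots> = (\<Sum>i\<le>n. \<Sum>j\<le>n. ac (n - i) j * (l * ff l i j x y))"
    proof (rule sum.cong[OF refl])
      fix i assume "i \<in> {..n}"
      have z: "ac (n-i) (Suc n) = 0" by (rule ac_gt) simp
      show "(\<Sum>j\<le>Suc n. ac (n - i) j * (l * ff l i j x y)) = (\<Sum>j\<le>n. ac (n - i) j * (l * ff l i j x y))"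
        by (subst sum.atMost_Suc) (simp add: z)
    qed
    also have "\<dots> = l * Bs l n x y"
      unfolding Bs_def by (simp add: sum_distrib_left algebra_simps)
    finally show ?thesis .
  qed
  have inner: "(\<Sum>j\<le>Suc n. ac m j * (P i j - Q i j)) = (\<Sum>j\<le>n. (ac m (Suc j) - ac m (Suc (Suc j))) * ff l i j x y)"
    if "m \<le> Suc n" for m i
  proof -
    have "(\<Sum>j\<le>Suc n. ac m j * (P i j - Q i j)) = (\<Sum>j\<le>Suc n. ac m j * P i j) - (\<Sum>j\<le>Suc n. ac m j * Q i j)"
      by (simp add: sum_subtractf right_diff_distrib)
    also have "(\<Sum>j\<le>Suc n. ac m j * P i j) = (\<Sum>j\<le>n. ac m (Suc j) * ff l i j x y)"
      unfolding P_def by (rule shiftP)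
    also have "(\<Sum>j\<le>Suc n. ac m j * Q i j) = (\<Sum>j\<le>n. ac m (Suc (Suc j)) * ff l i j x y)"
      unfolding Q_def by (rule shiftQ) (use that in \<open>simp add: ac_gt\<close>)
    finally show ?thesis by (simp add: sum_subtractf left_diff_distrib)
  qed
  have sPQ: "(\<Sum>i\<le>Suc n. \<Sum>j\<le>Suc n. ac (Suc n - i) j * (P i j - Q i j)) = Bs l n x y / 4"
  proof -
    have "(\<Sum>i\<le>Suc n. \<Sum>j\<le>Suc n. ac (Suc n - i) j * (P i j - Q i j))
        = (\<Sum>i\<le>Suc n. \<Sum>j\<le>n. (ac (Suc n - i) (Suc j) - ac (Suc n - i) (Suc (Suc j))) * ff l i j x y)"
      by (intro sum.cong refl inner) simp
    also have "\<dots> = (\<Sum>i\<le>n. \<Sum>j\<le>n. (ac (Suc n - i) (Suc j) - ac (Suc n - i) (Suc (Suc j))) * ff l i j x y)"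
      by (simp add: ac_def)
    also have "\<dots> = (\<Sum>i\<le>n. \<Sum>j\<le>n. ac (n - i) j / 4 * ff l i j x y)"
    proof (intro sum.cong refl)
      fix i j assume "i \<in> {..n}"
      then have "Suc n - i \<ge> 1" "Suc n - i - 1 = n - i" by auto
      then show "(ac (Suc n - i) (Suc j) - ac (Suc n - i) (Suc (Suc j))) * ff l i j x y = ac (n - i) j / 4 * ff l i j x y"
        using ac_rec[of "Suc n - i" j] by simp
    qed
    also have "\<dots> = Bs l n x y / 4"
      unfolding Bs_def by (simp add: sum_divide_distrib)
    finally show ?thesis .
  qed
  have "Wxy l (Suc n) x y = (\<Sum>i\<le>Suc n. \<Sum>j\<le>Suc n. ac (Suc n - i) j * A i j)
      + 4 * ker2 x y * (\<Sum>i\<le>Suc n. \<Sum>j\<le>Suc n. ac (Suc n - i) j * (P i j - Q i j))"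
  proof -
    have e: "ac (Suc n - i) j * fxy l i j x y = ac (Suc n - i) j * A i j + 4 * ker2 x y * (ac (Suc n - i) j * (P i j - Q i j))" for i j
      unfolding fe by (simp add: algebra_simps)
    show ?thesis unfolding Wxy_def e sum.distrib sum_distrib_left ..
  qed
  note W = this[unfolded sA sPQ]
  show ?thesis unfolding W by (simp add: algebra_simps)
qed


lemma DBs: assumes "\<bar>y\<bar> < x" shows "DERIV (\<lambda>x. Bs l n x y) x :> Wx l n x y"
  unfolding Bs_def Wx_def
  by (intro DERIV_sum DERIV_cmult DFx[OF assms])

lemma DWx: assumes "\<bar>y\<bar> < x" shows "DERIV (\<lambda>y. Wx l n x y) y :> Wxy l n x y"
  unfolding Wx_def Wxy_def
  by (intro DERIV_sum DERIV_cmult DFxy[OF assms])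

lemma Wx_0: assumes "x > 0" shows "Wx l (Suc n) x 0 = 0"
proof -
  have L: "Lf x 0 = 0" "Lx x 0 = 0" using assms by (auto simp: Lf_def Lx_def)
  have z: "ac (Suc n - i) j * fx l i j x 0 = 0" for i j
  proof (cases "i = 0 \<and> j = 0")
    case True then show ?thesis by (simp add: ac_def Cat_0)
  next
    case False then show ?thesis
      by (auto simp: fx_def L hx_def lm_def zero_power)
  qed
  show ?thesis unfolding Wx_def z by simp
qed

lemma Lf_nonneg: "0 \<le> y \<Longrightarrow> y < x \<Longrightarrow> Lf x y \<ge> 0"
  unfolding Lf_def by (auto intro!: ln_ge_zero simp: field_simps)

lemma ff_nonneg: "l \<ge> 0 \<Longrightarrow> 0 \<le> y \<Longrightarrow> y \<le> x \<Longrightarrow> ff l i j x y \<ge> 0"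
proof (cases "y = x")
  case True then show ?thesis by (simp add: ff_def hh_def)
next
  case False
  assume "l \<ge> 0" "0 \<le> y" "y \<le> x"
  then show ?thesis using False Lf_nonneg[of y x]
    by (auto simp: ff_def hh_def cc_def lm_def intro!: mult_nonneg_nonneg)
qed

lemma Bs_nonneg: "l \<ge> 0 \<Longrightarrow> 0 \<le> y \<Longrightarrow> y \<le> x \<Longrightarrow> Bs l n x y \<ge> 0"
  unfolding Bs_def by (intro sum_nonneg mult_nonneg_nonneg ac_nonneg ff_nonneg)

lemma ker2_nonneg: "0 \<le> y \<Longrightarrow> 0 \<le> x \<Longrightarrow> ker2 x y \<ge> 0"
  unfolding ker2_def by simp

lemma lim_term: assumes "y \<ge> 0" shows "((\<lambda>x. (x - y) * Lf x y ^ j) \<longlongrightarrow> 0) (at_right y)"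
proof (cases "y = 0")
  case True
  have "eventually (\<lambda>x. x * 0 ^ j = (x - y) * Lf x y ^ j) (at_right y)"
    unfolding True eventually_at_right_field
    by (rule exI[of _ 1]) (auto simp: Lf_def)
  moreover have "((\<lambda>x. x * 0 ^ j) \<longlongrightarrow> (0::real)) (at_right y)"
    unfolding True by (auto intro!: tendsto_eq_intros)
  ultimately show ?thesis by (rule Lim_transform_eventually[rotated]) 
next
  case False
  then have yp: "y > 0" using assms by simp
  have e: "(\<lambda>t. (t + y - y) * ln ((t + y + y) / (t + y - y)) ^ j) = (\<lambda>t. t * ln ((2*y+t)/t) ^ j)"
    by (simp add: algebra_simps)
  have "((\<lambda>t. t * ln ((2*y+t)/t) ^ j) \<longlongrightarrow> 0) (at_right 0)" using yp by real_asymp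
  then show ?thesis unfolding Lf_def filterlim_at_right_to_0[where a=y] e .
qed

lemma lim_Bs: assumes "y \<ge> 0" shows "((\<lambda>x. Bs l n x y) \<longlongrightarrow> 0) (at_right y)"
proof -
  have "((\<lambda>x. ff l i j x y) \<longlongrightarrow> 0) (at_right y)" for i j
  proof -
    have "ff l i j x y = cc l i * x^i * y^i * ((x - y) * Lf x y ^ j) / fact j" for x
      by (simp add: ff_def hh_def lm_def)
    moreover have "((\<lambda>x. cc l i * x^i * y^i * ((x - y) * Lf x y ^ j) / fact j) \<longlongrightarrow> cc l i * y^i * y^i * 0 / fact j) (at_right y)"
      by (intro tendsto_intros lim_term assms) simp
    ultimately show ?thesis by simp
  qed
  then have "((\<lambda>x. Bs l n x y) \<longlongrightarrow> (\<Sum>i\<le>n. \<Sum>j\<le>n. ac (n-i) j * 0)) (at_right y)"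
    unfolding Bs_def by (intro tendsto_intros)
  then show ?thesis by simp
qed


lemma Bs_meas: "(\<lambda>y. (l + ker2 x y) * Bs l n x y) \<in> borel_measurable borel"
  unfolding Bs_def ff_def cc_def hh_def lm_def Lf_def ker2_def by measurable

lemma Wx_nonneg: assumes "l \<ge> 0" "0 \<le> y" "y < x" shows "Wx l (Suc n) x y \<ge> 0"
proof -
  have "Wx l (Suc n) x 0 \<le> Wx l (Suc n) x y"
  proof (rule DERIV_nonneg_imp_nondecreasing[of 0 y])
    fix t assume t: "0 \<le> t" "t \<le> y"
    then have "\<bar>t\<bar> < x" using assms by auto
    then show "\<exists>d. DERIV (\<lambda>y. Wx l (Suc n) x y) t :> d \<and> 0 \<le> d"
      using DWx[of t x l "Suc n"] Wxy_eq[of l n x t] assms t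
      by (intro exI[of _ "Wxy l (Suc n) x t"]) (auto intro!: mult_nonneg_nonneg add_nonneg_nonneg Bs_nonneg ker2_nonneg)
  qed (use assms in auto)
  then show ?thesis using Wx_0[of x l n] assms by simp
qed

lemma inner_FTC: assumes "l \<ge> 0" "0 \<le> y" "y < x"
  shows "(\<integral>\<^sup>+t. ennreal ((l + ker2 x t) * Bs l n x t) * indicator {0..y} t \<partial>lborel) = ennreal (Wx l (Suc n) x y)"
proof -
  have "(\<integral>\<^sup>+t. ennreal ((l + ker2 x t) * Bs l n x t) * indicator {0..y} t \<partial>lborel) = Wx l (Suc n) x y - Wx l (Suc n) x 0"
  proof (rule nn_integral_FTC_Icc[OF Bs_meas])
    fix t assume t: "t \<in> {0..y}"
    then have "\<bar>t\<bar> < x" using assms by auto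
    then show "DERIV (Wx l (Suc n) x) t :> (l + ker2 x t) * Bs l n x t"
      using DWx[of t x l "Suc n"] Wxy_eq[of l n x t] by simp
    show "0 \<le> (l + ker2 x t) * Bs l n x t"
      using t assms by (auto intro!: mult_nonneg_nonneg add_nonneg_nonneg Bs_nonneg ker2_nonneg)
  qed (use assms in auto)
  then show ?thesis using Wx_0[of x l n] assms by simp
qed

lemma cont_fx: assumes "\<bar>y\<bar> < x" shows "isCont (\<lambda>x. fx l i j x y) x"
proof -
  have cL: "isCont (\<lambda>x. Lf x y) x" using D4[OF assms] by (rule DERIV_isCont)
  have c1: "isCont (\<lambda>x. lm j (Lf x y)) x"
    by (rule isCont_o2[OF cL DERIV_isCont[OF D7]])
  have c2: "isCont (\<lambda>x. dl j (Lf x y)) x"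
    by (rule isCont_o2[OF cL DERIV_isCont[OF D8]])
  have c3: "isCont (\<lambda>x. Lx x y) x"
    unfolding Lx_def using Dne[OF assms] by (auto intro!: continuous_intros)
  show ?thesis unfolding fx_def hx_def hh_def
    by (intro continuous_intros c1 c2 c3)
qed

lemma cont_Wx: assumes "\<bar>y\<bar> < x" shows "isCont (\<lambda>x. Wx l n x y) x"
  unfolding Wx_def by (intro continuous_intros cont_fx assms)

lemma outer_FTC: assumes "l \<ge> 0" "0 \<le> y" "y < a"
  shows "(\<integral>\<^sup>+x. ennreal (Wx l (Suc n) x y) * indicator {y<..<a} x \<partial>lborel) = ennreal (Bs l (Suc n) a y)"
proof -
  let ?F = "\<lambda>x. Bs l (Suc n) x y" and ?f = "\<lambda>x. Wx l (Suc n) x y"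
  have lt: "ereal y < ereal a" using assms by simp
  have A: "((?F \<circ> real_of_ereal) \<longlongrightarrow> 0) (at_right (ereal y))"
    unfolding ereal_tendsto_simps1 by (rule lim_Bs) (use assms in simp)
  have ca: "isCont ?F a" using DBs[of y a l "Suc n"] assms by (auto intro: DERIV_isCont)
  have B: "((?F \<circ> real_of_ereal) \<longlongrightarrow> ?F a) (at_left (ereal a))"
    unfolding ereal_tendsto_simps1 using ca by (simp add: isCont_def filterlim_at_split)
  have F1: "\<And>x. ereal y < ereal x \<Longrightarrow> ereal x < ereal a \<Longrightarrow> DERIV ?F x :> ?f x"
    using DBs[of y _ l "Suc n"] assms by auto
  have F2: "\<And>x. ereal y < ereal x \<Longrightarrow> ereal x < ereal a \<Longrightarrow> isCont ?f x"
    using cont_Wx[of y _ l "Suc n"] assms by auto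
  have F3: "AE x in lborel. ereal y < ereal x \<longrightarrow> ereal x < ereal a \<longrightarrow> 0 \<le> ?f x"
    using Wx_nonneg[OF assms(1,2)] by (auto intro!: AE_I2)
  note r = interval_integral_FTC_nonneg[OF lt F1 F2 F3 A B]
  have int: "integrable lborel (\<lambda>x. indicator {y<..<a} x *\<^sub>R ?f x)"
    using r(1) by (simp add: set_integrable_def)
  have val: "integral\<^sup>L lborel (\<lambda>x. indicator {y<..<a} x *\<^sub>R ?f x) = ?F a"
    using r(2) assms by (simp add: interval_lebesgue_integral_def set_lebesgue_integral_def)
  have "(\<integral>\<^sup>+x. ennreal (indicator {y<..<a} x *\<^sub>R ?f x) \<partial>lborel) = ennreal (integral\<^sup>L lborel (\<lambda>x. indicator {y<..<a} x *\<^sub>R ?f x))"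
    by (rule nn_integral_eq_integral[OF int]) (use Wx_nonneg[OF assms(1,2)] in \<open>auto intro!: AE_I2 simp: indicator_def\<close>)
  moreover have "(\<integral>\<^sup>+x. ennreal (indicator {y<..<a} x *\<^sub>R ?f x) \<partial>lborel) = (\<integral>\<^sup>+x. ennreal (?f x) * indicator {y<..<a} x \<partial>lborel)"
    by (intro nn_integral_cong) (auto simp: indicator_def)
  ultimately show ?thesis using val by simp
qed

lemma K: assumes "l \<ge> 0" "0 \<le> y" "y \<le> a"
  shows "(\<integral>\<^sup>+x. (\<integral>\<^sup>+t. ennreal ((l + ker2 x t) * Bs l n x t) * indicator {0..y} t \<partial>lborel) * indicator {y<..<a} x \<partial>lborel)
     = ennreal (Bs l (Suc n) a y)"
proof (cases "y = a")
  case True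
  then show ?thesis by (simp add: Bs_def ff_def hh_def)
next
  case False
  then have ya: "y < a" using assms by simp
  have "(\<integral>\<^sup>+x. (\<integral>\<^sup>+t. ennreal ((l + ker2 x t) * Bs l n x t) * indicator {0..y} t \<partial>lborel) * indicator {y<..<a} x \<partial>lborel)
      = (\<integral>\<^sup>+x. ennreal (Wx l (Suc n) x y) * indicator {y<..<a} x \<partial>lborel)"
    by (intro nn_integral_cong) (use inner_FTC[OF assms(1,2)] in \<open>auto simp: indicator_def\<close>)
  also have "\<dots> = ennreal (Bs l (Suc n) a y)" by (rule outer_FTC[OF assms(1,2) ya])
  finally show ?thesis .
qed



lemma meas_LBINT:
  fixes f :: "real \<times> real \<Rightarrow> real \<Rightarrow> real"
  assumes [measurable]: "(\<lambda>q. f (fst q) (snd q)) \<in> borel_measurable ((borel \<Otimes>\<^sub>M borel) \<Otimes>\<^sub>M lborel)"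
    and [measurable]: "a \<in> borel_measurable (borel \<Otimes>\<^sub>M borel)" "b \<in> borel_measurable (borel \<Otimes>\<^sub>M borel)"
  shows "(\<lambda>p. LBINT x=ereal (a p)..ereal (b p). f p x) \<in> borel_measurable (borel \<Otimes>\<^sub>M borel)"
proof -
  have e: "(LBINT x=ereal (a p)..ereal (b p). f p x) =
     (if a p \<le> b p then (\<integral>x. indicator {a p<..<b p} x * f p x \<partial>lborel)
      else - (\<integral>x. indicator {b p<..<a p} x * f p x \<partial>lborel))" for p
    by (simp add: interval_lebesgue_integral_def set_lebesgue_integral_def)
  have m1: "(\<lambda>(p, x). indicator {a p<..<b p} x * f p x) \<in> borel_measurable ((borel \<Otimes>\<^sub>M borel) \<Otimes>\<^sub>M lborel)"
    unfolding indicator_def greaterThanLessThan_iff by measurable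
  have m2: "(\<lambda>(p, x). indicator {b p<..<a p} x * f p x) \<in> borel_measurable ((borel \<Otimes>\<^sub>M borel) \<Otimes>\<^sub>M lborel)"
    unfolding indicator_def greaterThanLessThan_iff by measurable
  show ?thesis unfolding e
    using lborel.borel_measurable_lebesgue_integral[OF m1] lborel.borel_measurable_lebesgue_integral[OF m2]
    by measurable
qed


lemma meas_LBINT0:
  fixes f :: "real \<times> real \<Rightarrow> real \<Rightarrow> real"
  assumes [measurable]: "(\<lambda>q. f (fst q) (snd q)) \<in> borel_measurable ((borel \<Otimes>\<^sub>M borel) \<Otimes>\<^sub>M lborel)"
    and [measurable]: "b \<in> borel_measurable (borel \<Otimes>\<^sub>M borel)"
  shows "(\<lambda>p. LBINT x=0..ereal (b p). f p x) \<in> borel_measurable (borel \<Otimes>\<^sub>M borel)"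
  using meas_LBINT[of f "\<lambda>_. 0" b] by (simp add: zero_ereal_def)

lemma ker1_meas[measurable (raw)]:
  assumes [measurable]: "lam \<in> borel_measurable borel" "g \<in> borel_measurable M" "h \<in> borel_measurable M"
  shows "(\<lambda>x. ker1 \<epsilon> lam (g x) (h x)) \<in> borel_measurable M"
  unfolding ker1_def by measurable

lemma ker2_meas[measurable (raw)]:
  assumes [measurable]: "g \<in> borel_measurable M" "h \<in> borel_measurable M"
  shows "(\<lambda>x. ker2 (g x) (h x)) \<in> borel_measurable M"
  unfolding ker2_def by measurable

lemma snd_meas[measurable]: "snd \<in> borel_measurable (borel \<Otimes>\<^sub>M borel)"
  by (rule measurable_snd)
lemma fst_meas[measurable]: "fst \<in> borel_measurable (borel \<Otimes>\<^sub>M borel)"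
  by (rule measurable_fst)

lemma raw_pair:
  assumes "(\<lambda>q. F (fst q) (snd q)) \<in> borel_measurable (borel \<Otimes>\<^sub>M borel)"
    "g \<in> borel_measurable M" "h \<in> borel_measurable M"
  shows "(\<lambda>x. F (g x) (h x) :: real) \<in> borel_measurable M"
  using measurable_compose[OF measurable_Pair[OF assms(2,3)] assms(1)] by simp

lemma G_meas:
  assumes lm[measurable]: "lam \<in> borel_measurable borel"
  shows "(\<lambda>q. G \<epsilon> lam k (fst q) (snd q)) \<in> borel_measurable (borel \<Otimes>\<^sub>M borel)"
proof (induction k)
  case 0
  have "(\<lambda>q. LBINT x=ereal (snd q / 2)..ereal (fst q / 2). lam x / (2 * \<epsilon>)) \<in> borel_measurable (borel \<Otimes>\<^sub>M borel)"
    by (rule meas_LBINT) measurable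
  then show ?case by simp
next
  case (Suc k)
  have IH[measurable (raw)]: "g \<in> borel_measurable M \<Longrightarrow> h \<in> borel_measurable M \<Longrightarrow> (\<lambda>x. G \<epsilon> lam k (g x) (h x)) \<in> borel_measurable M" for g h and M :: "'b measure"
    by (rule raw_pair[OF Suc.IH])
  have h1[measurable]: "(\<lambda>q. LBINT \<sigma>=0..ereal (snd q). ker1 \<epsilon> lam (fst q) \<sigma> * G \<epsilon> lam k (fst q) \<sigma>) \<in> borel_measurable (borel \<Otimes>\<^sub>M borel)"
    by (rule meas_LBINT0) measurable
  have h2[measurable]: "(\<lambda>q. LBINT \<sigma>=0..ereal (snd q). ker2 (fst q) \<sigma> * G \<epsilon> lam k (fst q) \<sigma>) \<in> borel_measurable (borel \<Otimes>\<^sub>M borel)"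
    by (rule meas_LBINT0) measurable
  have h1'[measurable (raw)]: "g \<in> borel_measurable M \<Longrightarrow> h \<in> borel_measurable M \<Longrightarrow> (\<lambda>x. LBINT \<sigma>=0..ereal (h x). ker1 \<epsilon> lam (g x) \<sigma> * G \<epsilon> lam k (g x) \<sigma>) \<in> borel_measurable M" for g h and M :: "'b measure"
    by (rule raw_pair[OF h1])
  have h2'[measurable (raw)]: "g \<in> borel_measurable M \<Longrightarrow> h \<in> borel_measurable M \<Longrightarrow> (\<lambda>x. LBINT \<sigma>=0..ereal (h x). ker2 (g x) \<sigma> * G \<epsilon> lam k (g x) \<sigma>) \<in> borel_measurable M" for g h and M :: "'b measure"
    by (rule raw_pair[OF h2])
  have o1: "(\<lambda>p. LBINT \<eta>=ereal (snd p)..ereal (fst p). (LBINT \<sigma>=0..ereal (snd p). ker1 \<epsilon> lam \<eta> \<sigma> * G \<epsilon> lam k \<eta> \<sigma>)) \<in> borel_measurable (borel \<Otimes>\<^sub>M borel)"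
    by (rule meas_LBINT) measurable
  have o2: "(\<lambda>p. LBINT \<eta>=ereal (snd p)..ereal (fst p). (LBINT \<sigma>=0..ereal (snd p). ker2 \<eta> \<sigma> * G \<epsilon> lam k \<eta> \<sigma>)) \<in> borel_measurable (borel \<Otimes>\<^sub>M borel)"
    by (rule meas_LBINT) measurable
  show ?case using o1 o2 by simp
qed


lemma G_cong:
  assumes eq: "\<And>x. x \<in> {0..R} \<Longrightarrow> lam x = lam2 x"
  shows "(x, y) \<in> Tprime R \<Longrightarrow> G \<epsilon> lam k x y = G \<epsilon> lam2 k x y"
proof (induction k arbitrary: x y)
  case 0
  then have T: "0 \<le> y" "y \<le> x" "x \<le> 2*R" "y \<le> 2*R - x" by (auto simp: Tprime_def)
  have "(LBINT \<rho>=ereal (y/2)..ereal (x/2). lam \<rho> / (2 * \<epsilon>)) = (LBINT \<rho>=ereal (y/2)..ereal (x/2). lam2 \<rho> / (2 * \<epsilon>))"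
    by (rule interval_integral_cong) (use T in \<open>auto simp: min_def max_def intro!: eq\<close>)
  then show ?case by simp
next
  case (Suc k)
  then have T: "0 \<le> y" "y \<le> x" "x \<le> 2*R" "y \<le> 2*R - x" by (auto simp: Tprime_def)
  have inner: "(LBINT \<sigma>=0..ereal y. K \<eta> \<sigma> * G \<epsilon> lam k \<eta> \<sigma>) = (LBINT \<sigma>=0..ereal y. K \<eta> \<sigma> * G \<epsilon> lam2 k \<eta> \<sigma>)"
    if "y < \<eta>" "\<eta> < x" for \<eta> and K :: "real \<Rightarrow> real \<Rightarrow> real"
  proof (rule interval_integral_cong)
    fix \<sigma> assume s: "\<sigma> \<in> einterval (min 0 (ereal y)) (max 0 (ereal y))"
    then have "0 < \<sigma>" "\<sigma> < y" using T by (auto simp: min_def max_def zero_ereal_def)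
    then have "(\<eta>, \<sigma>) \<in> Tprime R" using T that by (auto simp: Tprime_def)
    then show "K \<eta> \<sigma> * G \<epsilon> lam k \<eta> \<sigma> = K \<eta> \<sigma> * G \<epsilon> lam2 k \<eta> \<sigma>" using Suc.IH by simp
  qed
  have k1: "ker1 \<epsilon> lam \<eta> \<sigma> = ker1 \<epsilon> lam2 \<eta> \<sigma>" if "0 \<le> \<sigma>" "\<sigma> \<le> \<eta>" "\<eta> \<le> 2*R" for \<eta> \<sigma>
    unfolding ker1_def using that by (auto intro!: eq)
  have inner1: "(LBINT \<sigma>=0..ereal y. ker1 \<epsilon> lam \<eta> \<sigma> * G \<epsilon> lam k \<eta> \<sigma>) = (LBINT \<sigma>=0..ereal y. ker1 \<epsilon> lam2 \<eta> \<sigma> * G \<epsilon> lam2 k \<eta> \<sigma>)"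
    if "y < \<eta>" "\<eta> < x" for \<eta>
  proof -
    have "(LBINT \<sigma>=0..ereal y. ker1 \<epsilon> lam \<eta> \<sigma> * G \<epsilon> lam k \<eta> \<sigma>) = (LBINT \<sigma>=0..ereal y. ker1 \<epsilon> lam2 \<eta> \<sigma> * G \<epsilon> lam k \<eta> \<sigma>)"
    proof (rule interval_integral_cong)
      fix \<sigma> assume s: "\<sigma> \<in> einterval (min 0 (ereal y)) (max 0 (ereal y))"
      then have "0 < \<sigma>" "\<sigma> < y" using T by (auto simp: min_def max_def zero_ereal_def)
      then show "ker1 \<epsilon> lam \<eta> \<sigma> * G \<epsilon> lam k \<eta> \<sigma> = ker1 \<epsilon> lam2 \<eta> \<sigma> * G \<epsilon> lam k \<eta> \<sigma>"
        using k1[of \<sigma> \<eta>] T that by auto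
    qed
    also have "\<dots> = (LBINT \<sigma>=0..ereal y. ker1 \<epsilon> lam2 \<eta> \<sigma> * G \<epsilon> lam2 k \<eta> \<sigma>)"
      by (rule inner[OF that])
    finally show ?thesis .
  qed
  have o1: "(LBINT \<eta>=ereal y..ereal x. (LBINT \<sigma>=0..ereal y. ker1 \<epsilon> lam \<eta> \<sigma> * G \<epsilon> lam k \<eta> \<sigma>))
      = (LBINT \<eta>=ereal y..ereal x. (LBINT \<sigma>=0..ereal y. ker1 \<epsilon> lam2 \<eta> \<sigma> * G \<epsilon> lam2 k \<eta> \<sigma>))"
    by (rule interval_integral_cong) (use T in \<open>auto simp: min_def max_def intro!: inner1\<close>)
  have o2: "(LBINT \<eta>=ereal y..ereal x. (LBINT \<sigma>=0..ereal y. ker2 \<eta> \<sigma> * G \<epsilon> lam k \<eta> \<sigma>))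
      = (LBINT \<eta>=ereal y..ereal x. (LBINT \<sigma>=0..ereal y. ker2 \<eta> \<sigma> * G \<epsilon> lam2 k \<eta> \<sigma>))"
    by (rule interval_integral_cong) (use T in \<open>auto simp: min_def max_def intro!: inner\<close>)
  show ?case using o1 o2 by simp
qed

lemma NB_int:
  fixes f :: "real \<Rightarrow> real"
  assumes "a \<le> b"
  shows "ennreal \<bar>LBINT x=ereal a..ereal b. f x\<bar> \<le> (\<integral>\<^sup>+x. ennreal \<bar>f x\<bar> * indicator {a<..<b} x \<partial>lborel)"
proof -
  have e: "(LBINT x=ereal a..ereal b. f x) = integral\<^sup>L lborel (\<lambda>x. indicator {a<..<b} x *\<^sub>R f x)"
    using assms by (simp add: interval_lebesgue_integral_def set_lebesgue_integral_def)
  have n: "(\<integral>\<^sup>+x. ennreal \<bar>f x\<bar> * indicator {a<..<b} x \<partial>lborel) = (\<integral>\<^sup>+x. ennreal (norm (indicator {a<..<b} x *\<^sub>R f x)) \<partial>lborel)"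
    by (intro nn_integral_cong) (auto simp: indicator_def)
  show ?thesis
  proof (cases "integrable lborel (\<lambda>x. indicator {a<..<b} x *\<^sub>R f x)")
    case True
    show ?thesis unfolding e n using integral_norm_bound_ennreal[OF True] by simp
  next
    case False
    then show ?thesis unfolding e by (simp add: not_integrable_integral_eq)
  qed
qed

lemma NB_int0:
  fixes f :: "real \<Rightarrow> real"
  assumes "0 \<le> b"
  shows "ennreal \<bar>LBINT x=0..ereal b. f x\<bar> \<le> (\<integral>\<^sup>+x. ennreal \<bar>f x\<bar> * indicator {0<..<b} x \<partial>lborel)"
  using NB_int[OF assms, of f] by (simp add: zero_ereal_def)

lemma Bs_meas2[measurable (raw)]:
  assumes [measurable]: "g \<in> borel_measurable M" "h \<in> borel_measurable M"
  shows "(\<lambda>x. Bs l n (g x) (h x)) \<in> borel_measurable M"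
  unfolding Bs_def ff_def cc_def hh_def lm_def Lf_def by measurable


lemma G_bound:
  assumes eps: "\<epsilon> > 0" and lb0: "lbar \<ge> 0" and lb: "\<And>\<rho>. \<rho> \<in> {0..R} \<Longrightarrow> \<bar>lam \<rho>\<bar> / (4 * \<epsilon>) \<le> lbar"
  shows "(x, y) \<in> Tprime R \<Longrightarrow> \<bar>G \<epsilon> lam k x y\<bar> \<le> Bs lbar k x y"
proof (induction k arbitrary: x y)
  case 0
  then have T: "0 \<le> y" "y \<le> x" "x \<le> 2*R" "y \<le> 2*R - x" by (auto simp: Tprime_def)
  have "ennreal \<bar>G \<epsilon> lam 0 x y\<bar> = ennreal \<bar>LBINT \<rho>=ereal (y/2)..ereal (x/2). lam \<rho> / (2 * \<epsilon>)\<bar>"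
    by simp
  also have "\<dots> \<le> (\<integral>\<^sup>+\<rho>. ennreal \<bar>lam \<rho> / (2 * \<epsilon>)\<bar> * indicator {y/2<..<x/2} \<rho> \<partial>lborel)"
    by (rule NB_int) (use T in simp)
  also have "\<dots> \<le> (\<integral>\<^sup>+\<rho>. ennreal (2 * lbar) * indicator {y/2<..<x/2} \<rho> \<partial>lborel)"
  proof (rule nn_integral_mono)
    fix \<rho>
    show "ennreal \<bar>lam \<rho> / (2 * \<epsilon>)\<bar> * indicator {y/2<..<x/2} \<rho> \<le> ennreal (2 * lbar) * indicator {y/2<..<x/2} \<rho>"
    proof (cases "\<rho> \<in> {y/2<..<x/2}")
      case True
      then have "\<rho> \<in> {0..R}" using T by auto
      then have "\<bar>lam \<rho>\<bar> / (4 * \<epsilon>) \<le> lbar" by (rule lb)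
      then have "\<bar>lam \<rho> / (2 * \<epsilon>)\<bar> \<le> 2 * lbar" using eps by (simp add: field_simps abs_divide)
      then show ?thesis using True by (simp add: ennreal_leI)
    qed simp
  qed
  also have "\<dots> = ennreal (2 * lbar) * ennreal (x/2 - y/2)"
    using T by (simp add: nn_integral_cmult_indicator)
  also have "\<dots> = ennreal (lbar * (x - y))"
  proof -
    have "2 * lbar * (x/2 - y/2) = lbar * (x - y)" by (simp add: algebra_simps)
    then show ?thesis using T lb0 by (simp add: ennreal_mult'[symmetric])
  qed
  finally have "\<bar>G \<epsilon> lam 0 x y\<bar> \<le> lbar * (x - y)"
    using T lb0 by (subst (asm) ennreal_le_iff) auto
  moreover have "Bs lbar 0 x y = lbar * (x - y)"
    by (simp add: Bs_def ac_def ff_def cc_def hh_def lm_def)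
  ultimately show ?case by simp
next
  case (Suc k)
  then have T: "0 \<le> y" "y \<le> x" "x \<le> 2*R" "y \<le> 2*R - x" by (auto simp: Tprime_def)
  have inT: "(\<eta>, \<sigma>) \<in> Tprime R" if "y \<le> \<eta>" "\<eta> \<le> x" "0 \<le> \<sigma>" "\<sigma> \<le> y" for \<eta> \<sigma>
    using T that by (auto simp: Tprime_def)
  have bk1: "\<bar>ker1 \<epsilon> lam \<eta> \<sigma> * G \<epsilon> lam k \<eta> \<sigma>\<bar> \<le> lbar * Bs lbar k \<eta> \<sigma>"
    if "y \<le> \<eta>" "\<eta> \<le> x" "0 \<le> \<sigma>" "\<sigma> \<le> y" for \<eta> \<sigma>
  proof -
    have "(\<eta> - \<sigma>)/2 \<in> {0..R}" using T that by auto
    then have "\<bar>ker1 \<epsilon> lam \<eta> \<sigma>\<bar> \<le> lbar" using lb eps by (simp add: ker1_def abs_divide)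
    moreover have "\<bar>G \<epsilon> lam k \<eta> \<sigma>\<bar> \<le> Bs lbar k \<eta> \<sigma>" by (rule Suc.IH[OF inT[OF that]])
    ultimately show ?thesis by (simp add: abs_mult mult_mono lb0)
  qed
  have bk2: "\<bar>ker2 \<eta> \<sigma> * G \<epsilon> lam k \<eta> \<sigma>\<bar> \<le> ker2 \<eta> \<sigma> * Bs lbar k \<eta> \<sigma>"
    if "y \<le> \<eta>" "\<eta> \<le> x" "0 \<le> \<sigma>" "\<sigma> \<le> y" for \<eta> \<sigma>
  proof -
    have "ker2 \<eta> \<sigma> \<ge> 0" using T that by (intro ker2_nonneg) auto
    moreover have "\<bar>G \<epsilon> lam k \<eta> \<sigma>\<bar> \<le> Bs lbar k \<eta> \<sigma>" by (rule Suc.IH[OF inT[OF that]])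
    ultimately show ?thesis by (simp add: abs_mult mult_left_mono)
  qed
  define X1 where "X1 \<eta> = (\<integral>\<^sup>+\<sigma>. ennreal (lbar * Bs lbar k \<eta> \<sigma>) * indicator {0..y} \<sigma> \<partial>lborel)" for \<eta>
  define X2 where "X2 \<eta> = (\<integral>\<^sup>+\<sigma>. ennreal (ker2 \<eta> \<sigma> * Bs lbar k \<eta> \<sigma>) * indicator {0..y} \<sigma> \<partial>lborel)" for \<eta>
  have gen: "ennreal \<bar>LBINT \<eta>=ereal y..ereal x. (LBINT \<sigma>=0..ereal y. K \<eta> \<sigma>)\<bar>
      \<le> (\<integral>\<^sup>+\<eta>. (\<integral>\<^sup>+\<sigma>. ennreal (H \<eta> \<sigma>) * indicator {0..y} \<sigma> \<partial>lborel) * indicator {y<..<x} \<eta> \<partial>lborel)"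
    if hK: "\<And>\<eta> \<sigma>. y \<le> \<eta> \<Longrightarrow> \<eta> \<le> x \<Longrightarrow> 0 \<le> \<sigma> \<Longrightarrow> \<sigma> \<le> y \<Longrightarrow> \<bar>K \<eta> \<sigma>\<bar> \<le> H \<eta> \<sigma>" for K H :: "real \<Rightarrow> real \<Rightarrow> real"
  proof -
    have "ennreal \<bar>LBINT \<eta>=ereal y..ereal x. (LBINT \<sigma>=0..ereal y. K \<eta> \<sigma>)\<bar>
       \<le> (\<integral>\<^sup>+\<eta>. ennreal \<bar>LBINT \<sigma>=0..ereal y. K \<eta> \<sigma>\<bar> * indicator {y<..<x} \<eta> \<partial>lborel)"
      by (rule NB_int) (use T in simp)
    also have "\<dots> \<le> (\<integral>\<^sup>+\<eta>. (\<integral>\<^sup>+\<sigma>. ennreal (H \<eta> \<sigma>) * indicator {0..y} \<sigma> \<partial>lborel) * indicator {y<..<x} \<eta> \<partial>lborel)"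
    proof (rule nn_integral_mono)
      fix \<eta>
      show "ennreal \<bar>LBINT \<sigma>=0..ereal y. K \<eta> \<sigma>\<bar> * indicator {y<..<x} \<eta> \<le> (\<integral>\<^sup>+\<sigma>. ennreal (H \<eta> \<sigma>) * indicator {0..y} \<sigma> \<partial>lborel) * indicator {y<..<x} \<eta>"
      proof (cases "\<eta> \<in> {y<..<x}")
        case True
        have "ennreal \<bar>LBINT \<sigma>=0..ereal y. K \<eta> \<sigma>\<bar> \<le> (\<integral>\<^sup>+\<sigma>. ennreal \<bar>K \<eta> \<sigma>\<bar> * indicator {0<..<y} \<sigma> \<partial>lborel)"
          by (rule NB_int0) (use T in simp)
        also have "\<dots> \<le> (\<integral>\<^sup>+\<sigma>. ennreal (H \<eta> \<sigma>) * indicator {0..y} \<sigma> \<partial>lborel)"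
        proof (rule nn_integral_mono)
          fix \<sigma>
          show "ennreal \<bar>K \<eta> \<sigma>\<bar> * indicator {0<..<y} \<sigma> \<le> ennreal (H \<eta> \<sigma>) * indicator {0..y} \<sigma>"
          proof (cases "\<sigma> \<in> {0<..<y}")
            case True2: True
            then have "\<bar>K \<eta> \<sigma>\<bar> \<le> H \<eta> \<sigma>" using True by (intro hK) auto
            then show ?thesis using True2 by (simp add: ennreal_leI)
          qed simp
        qed
        finally show ?thesis using True by simp
      qed simp
    qed
    finally show ?thesis .
  qed
  have g1: "ennreal \<bar>LBINT \<eta>=ereal y..ereal x. (LBINT \<sigma>=0..ereal y. ker1 \<epsilon> lam \<eta> \<sigma> * G \<epsilon> lam k \<eta> \<sigma>)\<bar>
      \<le> (\<integral>\<^sup>+\<eta>. X1 \<eta> * indicator {y<..<x} \<eta> \<partial>lborel)"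
    unfolding X1_def by (rule gen) (rule bk1)
  have g2: "ennreal \<bar>LBINT \<eta>=ereal y..ereal x. (LBINT \<sigma>=0..ereal y. ker2 \<eta> \<sigma> * G \<epsilon> lam k \<eta> \<sigma>)\<bar>
      \<le> (\<integral>\<^sup>+\<eta>. X2 \<eta> * indicator {y<..<x} \<eta> \<partial>lborel)"
    unfolding X2_def by (rule gen) (rule bk2)
  have m1: "(\<lambda>\<eta>. X1 \<eta> * indicator {y<..<x} \<eta>) \<in> borel_measurable lborel"
    unfolding X1_def by measurable
  have m2: "(\<lambda>\<eta>. X2 \<eta> * indicator {y<..<x} \<eta>) \<in> borel_measurable lborel"
    unfolding X2_def by measurable
  have X12: "X1 \<eta> + X2 \<eta> = (\<integral>\<^sup>+\<sigma>. ennreal ((lbar + ker2 \<eta> \<sigma>) * Bs lbar k \<eta> \<sigma>) * indicator {0..y} \<sigma> \<partial>lborel)"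
    if "y < \<eta>" for \<eta>
  proof -
    have "X1 \<eta> + X2 \<eta> = (\<integral>\<^sup>+\<sigma>. ennreal (lbar * Bs lbar k \<eta> \<sigma>) * indicator {0..y} \<sigma> + ennreal (ker2 \<eta> \<sigma> * Bs lbar k \<eta> \<sigma>) * indicator {0..y} \<sigma> \<partial>lborel)"
      unfolding X1_def X2_def by (rule nn_integral_add[symmetric]) measurable
    also have "\<dots> = (\<integral>\<^sup>+\<sigma>. ennreal ((lbar + ker2 \<eta> \<sigma>) * Bs lbar k \<eta> \<sigma>) * indicator {0..y} \<sigma> \<partial>lborel)"
    proof (rule nn_integral_cong)
      fix \<sigma>
      show "ennreal (lbar * Bs lbar k \<eta> \<sigma>) * indicator {0..y} \<sigma> + ennreal (ker2 \<eta> \<sigma> * Bs lbar k \<eta> \<sigma>) * indicator {0..y} \<sigma>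
          = ennreal ((lbar + ker2 \<eta> \<sigma>) * Bs lbar k \<eta> \<sigma>) * indicator {0..y} \<sigma>"
      proof (cases "\<sigma> \<in> {0..y}")
        case True
        then have "Bs lbar k \<eta> \<sigma> \<ge> 0" "ker2 \<eta> \<sigma> \<ge> 0" using that T
          by (auto intro!: Bs_nonneg ker2_nonneg lb0)
        then show ?thesis using True lb0 by (simp add: ennreal_plus[symmetric] distrib_right del: ennreal_plus)
      qed simp
    qed
    finally show ?thesis .
  qed
  have "(\<integral>\<^sup>+\<eta>. X1 \<eta> * indicator {y<..<x} \<eta> \<partial>lborel) + (\<integral>\<^sup>+\<eta>. X2 \<eta> * indicator {y<..<x} \<eta> \<partial>lborel)
      = (\<integral>\<^sup>+\<eta>. X1 \<eta> * indicator {y<..<x} \<eta> + X2 \<eta> * indicator {y<..<x} \<eta> \<partial>lborel)"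
    by (rule nn_integral_add[symmetric, OF m1 m2])
  also have "\<dots> = (\<integral>\<^sup>+\<eta>. (\<integral>\<^sup>+\<sigma>. ennreal ((lbar + ker2 \<eta> \<sigma>) * Bs lbar k \<eta> \<sigma>) * indicator {0..y} \<sigma> \<partial>lborel) * indicator {y<..<x} \<eta> \<partial>lborel)"
    by (intro nn_integral_cong) (auto simp: indicator_def X12)
  also have "\<dots> = ennreal (Bs lbar (Suc k) x y)"
    by (rule K[OF lb0 T(1,2)])
  finally have sum: "(\<integral>\<^sup>+\<eta>. X1 \<eta> * indicator {y<..<x} \<eta> \<partial>lborel) + (\<integral>\<^sup>+\<eta>. X2 \<eta> * indicator {y<..<x} \<eta> \<partial>lborel) = ennreal (Bs lbar (Suc k) x y)" .
  define I1 where "I1 = (LBINT \<eta>=ereal y..ereal x. (LBINT \<sigma>=0..ereal y. ker1 \<epsilon> lam \<eta> \<sigma> * G \<epsilon> lam k \<eta> \<sigma>))"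
  define I2 where "I2 = (LBINT \<eta>=ereal y..ereal x. (LBINT \<sigma>=0..ereal y. ker2 \<eta> \<sigma> * G \<epsilon> lam k \<eta> \<sigma>))"
  have "ennreal (\<bar>I1\<bar> + \<bar>I2\<bar>) = ennreal \<bar>I1\<bar> + ennreal \<bar>I2\<bar>" by (simp add: ennreal_plus)
  also have "\<dots> \<le> ennreal (Bs lbar (Suc k) x y)"
    unfolding sum[symmetric] I1_def I2_def by (intro add_mono g1 g2)
  finally have "\<bar>I1\<bar> + \<bar>I2\<bar> \<le> Bs lbar (Suc k) x y"
    using Bs_nonneg[OF lb0 T(1,2)] by (subst (asm) ennreal_le_iff) auto
  moreover have "G \<epsilon> lam (Suc k) x y = I1 + I2" unfolding I1_def I2_def by (simp add: zero_ereal_def)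
  ultimately show ?case by simp
qed


lemma set_int_gen:
  fixes F :: "real \<Rightarrow> real \<Rightarrow> real"
  assumes lb0: "lbar \<ge> 0" and T: "0 \<le> y" "y \<le> a"
    and meas: "(\<lambda>q. indicator ({y..a} \<times> {0..y}) q * F (fst q) (snd q)) \<in> borel_measurable (borel \<Otimes>\<^sub>M borel)"
    and bd: "\<And>\<eta> \<sigma>. y \<le> \<eta> \<Longrightarrow> \<eta> \<le> a \<Longrightarrow> 0 \<le> \<sigma> \<Longrightarrow> \<sigma> \<le> y \<Longrightarrow> \<bar>F \<eta> \<sigma>\<bar> \<le> (lbar + ker2 \<eta> \<sigma>) * Bs lbar k \<eta> \<sigma>"
  shows "set_integrable lborel ({y..a} \<times> {0..y}) (\<lambda>(\<eta>, \<sigma>). F \<eta> \<sigma>)"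
proof -
  let ?S = "{y..a} \<times> {0..y}"
  let ?W = "\<lambda>\<eta> \<sigma>. (lbar + ker2 \<eta> \<sigma>) * Bs lbar k \<eta> \<sigma>"
  have fe: "(\<lambda>p. indicator ?S p *\<^sub>R (case p of (\<eta>, \<sigma>) \<Rightarrow> F \<eta> \<sigma>)) = (\<lambda>q. indicator ?S q * F (fst q) (snd q))"
    by (auto simp: case_prod_beta)
  have m: "(\<lambda>q. indicator ?S q * F (fst q) (snd q)) \<in> borel_measurable lborel"
    using meas by (simp add: borel_prod)
  have "(\<integral>\<^sup>+q. ennreal (norm (indicator ?S q * F (fst q) (snd q))) \<partial>lborel)
      \<le> (\<integral>\<^sup>+q. ennreal (?W (fst q) (snd q)) * indicator ?S q \<partial>lborel)"
  proof (rule nn_integral_mono)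
    fix q :: "real \<times> real"
    show "ennreal (norm (indicator ?S q * F (fst q) (snd q))) \<le> ennreal (?W (fst q) (snd q)) * indicator ?S q"
    proof (cases "q \<in> ?S")
      case True
      then show ?thesis using bd[of "fst q" "snd q"] by (auto simp: ennreal_leI)
    qed simp
  qed
  also have "\<dots> = (\<integral>\<^sup>+q. ennreal (?W (fst q) (snd q)) * indicator ?S q \<partial>(lborel \<Otimes>\<^sub>M lborel))"
    by (simp add: lborel_prod)
  also have "\<dots> = (\<integral>\<^sup>+\<eta>. (\<integral>\<^sup>+\<sigma>. ennreal (?W \<eta> \<sigma>) * indicator ?S (\<eta>, \<sigma>) \<partial>lborel) \<partial>lborel)"
  proof -
    have mm: "(\<lambda>q. ennreal (?W (fst q) (snd q)) * indicator ?S q) \<in> borel_measurable (lborel \<Otimes>\<^sub>M lborel)"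
      by measurable
    show ?thesis using lborel.nn_integral_fst[OF mm] by simp
  qed
  also have "\<dots> = (\<integral>\<^sup>+\<eta>. (\<integral>\<^sup>+\<sigma>. ennreal (?W \<eta> \<sigma>) * indicator {0..y} \<sigma> \<partial>lborel) * indicator {y..a} \<eta> \<partial>lborel)"
  proof (rule nn_integral_cong)
    fix \<eta>
    have "(\<integral>\<^sup>+\<sigma>. ennreal (?W \<eta> \<sigma>) * indicator ?S (\<eta>, \<sigma>) \<partial>lborel) = (\<integral>\<^sup>+\<sigma>. ennreal (?W \<eta> \<sigma>) * indicator {0..y} \<sigma> * indicator {y..a} \<eta> \<partial>lborel)"
      by (intro nn_integral_cong) (auto simp: indicator_def)
    also have "\<dots> = (\<integral>\<^sup>+\<sigma>. ennreal (?W \<eta> \<sigma>) * indicator {0..y} \<sigma> \<partial>lborel) * indicator {y..a} \<eta>"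
      by (rule nn_integral_multc) measurable
    finally show "(\<integral>\<^sup>+\<sigma>. ennreal (?W \<eta> \<sigma>) * indicator ?S (\<eta>, \<sigma>) \<partial>lborel) = (\<integral>\<^sup>+\<sigma>. ennreal (?W \<eta> \<sigma>) * indicator {0..y} \<sigma> \<partial>lborel) * indicator {y..a} \<eta>" .
  qed
  also have "\<dots> = (\<integral>\<^sup>+\<eta>. (\<integral>\<^sup>+\<sigma>. ennreal (?W \<eta> \<sigma>) * indicator {0..y} \<sigma> \<partial>lborel) * indicator {y<..<a} \<eta> \<partial>lborel)"
  proof (rule nn_integral_cong_AE)
    have "AE \<eta> in lborel. \<eta> \<noteq> y" "AE \<eta> in lborel. \<eta> \<noteq> a" by (rule AE_lborel_singleton)+
    then show "AE \<eta> in lborel. (\<integral>\<^sup>+\<sigma>. ennreal (?W \<eta> \<sigma>) * indicator {0..y} \<sigma> \<partial>lborel) * indicator {y..a} \<eta> =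
        (\<integral>\<^sup>+\<sigma>. ennreal (?W \<eta> \<sigma>) * indicator {0..y} \<sigma> \<partial>lborel) * indicator {y<..<a} \<eta>"
      by eventually_elim (auto simp: indicator_def)
  qed
  also have "\<dots> = ennreal (Bs lbar (Suc k) a y)"
    by (rule K[OF lb0 T])
  finally have "(\<integral>\<^sup>+q. ennreal (norm (indicator ?S q * F (fst q) (snd q))) \<partial>lborel) < \<infinity>"
    by (simp add: le_less_trans)
  then show ?thesis unfolding set_integrable_def fe by (intro integrableI_bounded m)
qed


lemma Bs_stmt:
  "Fnk l n 0 x y + (\<Sum>i<n. \<Sum>j=1..n-i. real (Cat (n - i) j) / 4 ^ (n - i) * Fnk l i j x y) = Bs l n x y"
proof -
  define h where "h i = (\<Sum>j\<le>n. ac (n-i) j * ff l i j x y)" for i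
  have "Bs l n x y = (\<Sum>i<Suc n. h i)" unfolding Bs_def h_def by (simp add: lessThan_Suc_atMost)
  also have "\<dots> = (\<Sum>i<n. h i) + h n" by simp
  also have "h n = ff l n 0 x y"
  proof -
    have "h n = (\<Sum>j\<le>n. (if j = 0 then ff l n j x y else 0))"
      unfolding h_def by (intro sum.cong refl) (simp add: ac_def)
    also have "\<dots> = ff l n 0 x y" by (simp add: sum.delta')
    finally show ?thesis .
  qed
  also have "(\<Sum>i<n. h i) = (\<Sum>i<n. \<Sum>j=1..n-i. real (Cat (n - i) j) / 4 ^ (n - i) * Fnk l i j x y)"
  proof (rule sum.cong[OF refl])
    fix i assume i: "i \<in> {..<n}"
    then have m: "n - i \<ge> 1" by simp
    have "h i = (\<Sum>j\<in>{1..n-i}. ac (n-i) j * ff l i j x y)"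
      unfolding h_def
    proof (rule sum.mono_neutral_right)
      show "\<forall>j\<in>{..n} - {1..n-i}. ac (n-i) j * ff l i j x y = 0"
      proof
        fix j assume "j \<in> {..n} - {1..n-i}"
        then have "j = 0 \<or> j > n - i" by auto
        then show "ac (n-i) j * ff l i j x y = 0" using m by (auto simp: ac_def Cat_0 Cat_gt)
      qed
    qed auto
    also have "\<dots> = (\<Sum>j=1..n-i. real (Cat (n - i) j) / 4 ^ (n - i) * Fnk l i j x y)"
    proof (rule sum.cong[OF refl])
      fix j assume "j \<in> {1..n-i}"
      have ni: "n - i \<noteq> 0" using i by simp
      show "ac (n-i) j * ff l i j x y = real (Cat (n - i) j) / 4 ^ (n - i) * Fnk l i j x y"
        using ni by (simp add: ac_def Fnk_ff)
    qed
    finally show "h i = (\<Sum>j=1..n-i. real (Cat (n - i) j) / 4 ^ (n - i) * Fnk l i j x y)" .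
  qed
  finally show ?thesis by (simp add: Fnk_ff)
qed


theorem lemma3:
  fixes \<epsilon> R :: real and lam :: "real \<Rightarrow> real"
  assumes "\<epsilon> > 0" and "R > 0" and "continuous_on {0..R} lam"
  defines "lbar \<equiv> (SUP \<rho>\<in>{0..R}. \<bar>lam \<rho>\<bar> / (4 * \<epsilon>))"
  shows "(\<forall>\<alpha> \<beta>. (\<alpha>, \<beta>) \<in> Tprime R \<longrightarrow> \<bar>G \<epsilon> lam 0 \<alpha> \<beta>\<bar> \<le> Fnk lbar 0 0 \<alpha> \<beta>)
       \<and> (\<forall>n \<ge> 1. \<forall>\<alpha> \<beta>. (\<alpha>, \<beta>) \<in> Tprime R \<longrightarrow>
            set_integrable lborel ({\<beta>..\<alpha>} \<times> {0..\<beta>})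
              (\<lambda>(\<eta>, \<sigma>). ker1 \<epsilon> lam \<eta> \<sigma> * G \<epsilon> lam (n - 1) \<eta> \<sigma>)
          \<and> set_integrable lborel ({\<beta>..\<alpha>} \<times> {0..\<beta>})
              (\<lambda>(\<eta>, \<sigma>). ker2 \<eta> \<sigma> * G \<epsilon> lam (n - 1) \<eta> \<sigma>)
          \<and> \<bar>G \<epsilon> lam n \<alpha> \<beta>\<bar> \<le> Fnk lbar n 0 \<alpha> \<beta>
               + (\<Sum>i<n. \<Sum>j=1..n-i. real (Cat (n - i) j) / 4 ^ (n - i) * Fnk lbar i j \<alpha> \<beta>))"
proof -
  note eps = assms(1) and Rp = assms(2) and cont = assms(3)
  have cont2: "continuous_on {0..R} (\<lambda>\<rho>. \<bar>lam \<rho>\<bar> / (4 * \<epsilon>))"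
    by (intro continuous_intros cont) (use eps in simp)
  have bdd: "bdd_above ((\<lambda>\<rho>. \<bar>lam \<rho>\<bar> / (4 * \<epsilon>)) ` {0..R})"
    by (intro bounded_imp_bdd_above compact_imp_bounded compact_continuous_image cont2 compact_Icc)
  have lb: "\<bar>lam \<rho>\<bar> / (4 * \<epsilon>) \<le> lbar" if "\<rho> \<in> {0..R}" for \<rho>
    unfolding lbar_def by (rule cSUP_upper[OF that bdd])
  have lb0: "lbar \<ge> 0"
  proof -
    have "0 \<le> \<bar>lam 0\<bar> / (4 * \<epsilon>)" using eps by simp
    also have "\<dots> \<le> lbar" using lb[of 0] Rp by simp
    finally show ?thesis .
  qed
  define lam2 where "lam2 x = lam (max 0 (min R x))" for x
  have eq: "lam x = lam2 x" if "x \<in> {0..R}" for x using that by (simp add: lam2_def)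
  have c2: "continuous_on UNIV lam2"
    unfolding lam2_def
    by (rule continuous_on_compose2[OF cont]) (use Rp in \<open>auto intro!: continuous_intros\<close>)
  have lam2_meas[measurable]: "lam2 \<in> borel_measurable borel"
    using c2 by (rule borel_measurable_continuous_onI)
  have Gm: "(\<lambda>q. G \<epsilon> lam2 k (fst q) (snd q)) \<in> borel_measurable (borel \<Otimes>\<^sub>M borel)" for k
    by (rule G_meas[OF lam2_meas])
  have Gm'[measurable (raw)]: "g \<in> borel_measurable M \<Longrightarrow> h \<in> borel_measurable M \<Longrightarrow> (\<lambda>x. G \<epsilon> lam2 k (g x) (h x)) \<in> borel_measurable M" for g h k and M :: "'b measure"
    by (rule raw_pair[OF Gm])
  have bound: "\<bar>G \<epsilon> lam k x y\<bar> \<le> Bs lbar k x y" if "(x, y) \<in> Tprime R" for k x y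
    by (rule G_bound[OF eps lb0 lb that])
  show ?thesis
  proof (intro conjI allI impI)
    fix \<alpha> \<beta> assume "(\<alpha>, \<beta>) \<in> Tprime R"
    then show "\<bar>G \<epsilon> lam 0 \<alpha> \<beta>\<bar> \<le> Fnk lbar 0 0 \<alpha> \<beta>"
      using bound[of \<alpha> \<beta> 0] Bs_stmt[of lbar 0 \<alpha> \<beta>] by simp
  next
    fix n :: nat and \<alpha> \<beta> assume n: "n \<ge> 1" and T: "(\<alpha>, \<beta>) \<in> Tprime R"
    then have T': "0 \<le> \<beta>" "\<beta> \<le> \<alpha>" "\<alpha> \<le> 2*R" "\<beta> \<le> 2*R - \<alpha>" by (auto simp: Tprime_def)
    have inT: "(\<eta>, \<sigma>) \<in> Tprime R" if "\<beta> \<le> \<eta>" "\<eta> \<le> \<alpha>" "0 \<le> \<sigma>" "\<sigma> \<le> \<beta>" for \<eta> \<sigma>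
      using T' that by (auto simp: Tprime_def)
    have inS: "(fst q, snd q) \<in> Tprime R" if "q \<in> {\<beta>..\<alpha>} \<times> {0..\<beta>}" for q
      using that by (intro inT) auto
    let ?S = "{\<beta>..\<alpha>} \<times> {0..\<beta>}"
    have Gc: "G \<epsilon> lam k (fst q) (snd q) = G \<epsilon> lam2 k (fst q) (snd q)" if "q \<in> ?S" for q k
      using G_cong[of R lam lam2, OF eq inS[OF that]] by simp
    have k1c: "ker1 \<epsilon> lam (fst q) (snd q) = ker1 \<epsilon> lam2 (fst q) (snd q)" if "q \<in> ?S" for q
      using that T' unfolding ker1_def by (intro arg_cong[where f="\<lambda>t. t / (4 * \<epsilon>)"] eq) auto
    show "set_integrable lborel ?S (\<lambda>(\<eta>, \<sigma>). ker1 \<epsilon> lam \<eta> \<sigma> * G \<epsilon> lam (n - 1) \<eta> \<sigma>)"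
    proof (rule set_int_gen[OF lb0 T'(1,2)])
      have "(\<lambda>q. indicator ?S q * (ker1 \<epsilon> lam (fst q) (snd q) * G \<epsilon> lam (n - 1) (fst q) (snd q)))
          = (\<lambda>q. indicator ?S q * (ker1 \<epsilon> lam2 (fst q) (snd q) * G \<epsilon> lam2 (n - 1) (fst q) (snd q)))"
        by (rule ext) (auto simp: indicator_def Gc k1c)
      moreover have "(\<lambda>q. indicator ?S q * (ker1 \<epsilon> lam2 (fst q) (snd q) * G \<epsilon> lam2 (n - 1) (fst q) (snd q))) \<in> borel_measurable (borel \<Otimes>\<^sub>M borel)"
        by measurable
      ultimately show "(\<lambda>q. indicator ?S q * (ker1 \<epsilon> lam (fst q) (snd q) * G \<epsilon> lam (n - 1) (fst q) (snd q))) \<in> borel_measurable (borel \<Otimes>\<^sub>M borel)"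
        by simp
    next
      fix \<eta> \<sigma> assume a: "\<beta> \<le> \<eta>" "\<eta> \<le> \<alpha>" "0 \<le> \<sigma>" "\<sigma> \<le> \<beta>"
      have "(\<eta> - \<sigma>)/2 \<in> {0..R}" using T' a by auto
      then have k: "\<bar>ker1 \<epsilon> lam \<eta> \<sigma>\<bar> \<le> lbar" using lb eps by (simp add: ker1_def abs_divide)
      have g: "\<bar>G \<epsilon> lam (n-1) \<eta> \<sigma>\<bar> \<le> Bs lbar (n-1) \<eta> \<sigma>" by (rule bound[OF inT[OF a]])
      have b0: "Bs lbar (n-1) \<eta> \<sigma> \<ge> 0" "ker2 \<eta> \<sigma> \<ge> 0" using a T' lb0 by (auto intro!: Bs_nonneg ker2_nonneg)
      have "\<bar>ker1 \<epsilon> lam \<eta> \<sigma> * G \<epsilon> lam (n-1) \<eta> \<sigma>\<bar> \<le> lbar * Bs lbar (n-1) \<eta> \<sigma>"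
        using k g by (simp add: abs_mult mult_mono lb0)
      also have "\<dots> \<le> (lbar + ker2 \<eta> \<sigma>) * Bs lbar (n-1) \<eta> \<sigma>"
        using b0 by (intro mult_right_mono) auto
      finally show "\<bar>ker1 \<epsilon> lam \<eta> \<sigma> * G \<epsilon> lam (n-1) \<eta> \<sigma>\<bar> \<le> (lbar + ker2 \<eta> \<sigma>) * Bs lbar (n-1) \<eta> \<sigma>" .
    qed
    show "set_integrable lborel ?S (\<lambda>(\<eta>, \<sigma>). ker2 \<eta> \<sigma> * G \<epsilon> lam (n - 1) \<eta> \<sigma>)"
    proof (rule set_int_gen[OF lb0 T'(1,2)])
      have "(\<lambda>q. indicator ?S q * (ker2 (fst q) (snd q) * G \<epsilon> lam (n - 1) (fst q) (snd q)))
          = (\<lambda>q. indicator ?S q * (ker2 (fst q) (snd q) * G \<epsilon> lam2 (n - 1) (fst q) (snd q)))"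
        by (rule ext) (auto simp: indicator_def Gc)
      moreover have "(\<lambda>q. indicator ?S q * (ker2 (fst q) (snd q) * G \<epsilon> lam2 (n - 1) (fst q) (snd q))) \<in> borel_measurable (borel \<Otimes>\<^sub>M borel)"
        by measurable
      ultimately show "(\<lambda>q. indicator ?S q * (ker2 (fst q) (snd q) * G \<epsilon> lam (n - 1) (fst q) (snd q))) \<in> borel_measurable (borel \<Otimes>\<^sub>M borel)"
        by simp
    next
      fix \<eta> \<sigma> assume a: "\<beta> \<le> \<eta>" "\<eta> \<le> \<alpha>" "0 \<le> \<sigma>" "\<sigma> \<le> \<beta>"
      have g: "\<bar>G \<epsilon> lam (n-1) \<eta> \<sigma>\<bar> \<le> Bs lbar (n-1) \<eta> \<sigma>" by (rule bound[OF inT[OF a]])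
      have b0: "Bs lbar (n-1) \<eta> \<sigma> \<ge> 0" "ker2 \<eta> \<sigma> \<ge> 0" using a T' lb0 by (auto intro!: Bs_nonneg ker2_nonneg)
      have "\<bar>ker2 \<eta> \<sigma> * G \<epsilon> lam (n-1) \<eta> \<sigma>\<bar> \<le> ker2 \<eta> \<sigma> * Bs lbar (n-1) \<eta> \<sigma>"
        using g b0 by (simp add: abs_mult mult_left_mono)
      also have "\<dots> \<le> (lbar + ker2 \<eta> \<sigma>) * Bs lbar (n-1) \<eta> \<sigma>"
        using b0 lb0 by (intro mult_right_mono) auto
      finally show "\<bar>ker2 \<eta> \<sigma> * G \<epsilon> lam (n-1) \<eta> \<sigma>\<bar> \<le> (lbar + ker2 \<eta> \<sigma>) * Bs lbar (n-1) \<eta> \<sigma>" .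
    qed
    show "\<bar>G \<epsilon> lam n \<alpha> \<beta>\<bar> \<le> Fnk lbar n 0 \<alpha> \<beta>
               + (\<Sum>i<n. \<Sum>j=1..n-i. real (Cat (n - i) j) / 4 ^ (n - i) * Fnk lbar i j \<alpha> \<beta>)"
      unfolding Bs_stmt by (rule bound[OF T])
  qed
qed


end
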